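(* Consider the multi-element (three spatial elements, periodic), single-slab space-time SBP scheme: unknowns $\boldsymbol\rho,\boldsymbol g_1,\dots,\boldsymbol g_{n_v}\in\mathbb R^{3(n_t+1)(n_x+1)}$ satisfying $$\mathsf D_t\boldsymbol\rho+\tilde{\mathsf D}_x\langle v\boldsymbol g\rangle=-\sigma_a\boldsymbol\rho-\mathsf H_t^{-1}\mathsf t_B\mathsf t_B^\top(\boldsymbol\rho-\boldsymbol\rho(0)),$$ $$\mathsf D_t\boldsymbol g_k+\tfrac{v_k}{\varepsilon}\tilde{\mathsf D}_x\boldsymbol g_k-\tfrac1\varepsilon\langle v\tilde{\mathsf D}_x\boldsymbol g\rangle+\tfrac{v_k}{\varepsilon^2}\tilde{\mathsf D}_x\boldsymbol\rho=-\Big(\tfrac{\sigma_s}{\varepsilon^2}+\sigma_a\Big)\boldsymbol g_k-\mathsf H_t^{-1}\mathsf t_B\mathsf t_B^\top(\boldsymbol g_k-\boldsymbol g_k(0)),\quad k=1,\dots,n_v,$$ with initial data satisfying $\langle\boldsymbol g(0)\rangle=0$. Then the scheme is stable: with $M_T=\bar{\boldsymbol t}_T\bar{\boldsymbol t}_T^\top\otimes\mathsf I_3\otimes\bar{\mathsf H}_x$ and $M_B=\bar{\boldsymbol t}_B\bar{\boldsymbol t}_B^\top\otimes\mathsf I_3\otimes\bar{\mathsf H}_x$, every solution satisfies $$\tfrac12\boldsymbol\rho^\top M_T\boldsymbol\rho+\tfrac{\varepsilon^2}2\langle\boldsymbol g^\top M_T\boldsymbol g\rangle\le\tfrac12\boldsymbol\rho(0)^\top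 M_B\boldsymbol\rho(0)+\tfrac{\varepsilon^2}2\langle\boldsymbol g(0)^\top M_B\boldsymbol g(0)\rangle.$$
   Context: SBP operators: $\bar{\mathsf D}=\bar{\mathsf H}^{-1}\bar{\mathsf Q}$ on nodes $x_0<\dots<x_n$ is a degree-$p$ SBP approximation of $d/dx$ if $\bar{\mathsf D}\boldsymbol x^k=k\boldsymbol x^{k-1}$ for $0\le k\le p$, $\bar{\mathsf H}$ is diagonal symmetric positive definite, and $\bar{\mathsf Q}+\bar{\mathsf Q}^\top=\bar{\mathsf E}=\bar{\boldsymbol t}_R\bar{\boldsymbol t}_R^\top-\bar{\boldsymbol t}_L\bar{\boldsymbol t}_L^\top=\mathrm{diag}(-1,0,\dots,0,1)$, $\bar{\boldsymbol t}_L,\bar{\boldsymbol t}_R$ first/last unit vectors. $\bar{\mathsf D}_x=\bar{\mathsf H}_x^{-1}\bar{\mathsf Q}_x$ on $n_x+1$ spatial nodes per element, $\bar{\mathsf S}_x=\bar{\mathsf Q}_x-\frac12\bar{\mathsf E}_x$; $\bar{\mathsf D}_t=\bar{\mathsf H}_t^{-1}\bar{\mathsf Q}_t$ on $n_t+1$ temporal nodes, first/last unit vectors $\bar{\boldsymbol t}_B,\bar{\boldsymbol t}_T$. Global periodic spatial operator over three elements: $\tilde{\bar{\mathsf D}}^G_x=(\mathsf I_3\otimes\bar{\mathsf H}_x^{-1})\tilde{\bar{\mathsf Q}}^G_x$, where $\tilde{\bar{\mathsf Q}}^G_x$ is the $3\times3$ block matrix with diagonal blocks $\bar{\mathsf S}_x$,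 blocks $(1,2),(2,3),(3,1)$ equal to $\frac12\bar{\boldsymbol t}_R\bar{\boldsymbol t}_L^\top$ and blocks $(2,1),(3,2),(1,3)$ equal to $-\frac12\bar{\boldsymbol t}_L\bar{\boldsymbol t}_R^\top$. With identities $\mathsf I_{n_x},\mathsf I_{n_t}$ of sizes $n_x+1,n_t+1$: $\tilde{\mathsf D}_x=\mathsf I_{n_t}\otimes\tilde{\bar{\mathsf D}}^G_x$, $\mathsf D_t=\bar{\mathsf D}_t\otimes\mathsf I_3\otimes\mathsf I_{n_x}$, $\mathsf H_t=\bar{\mathsf H}_t\otimes\mathsf I_3\otimes\mathsf I_{n_x}$, $\mathsf t_B=\bar{\boldsymbol t}_B\otimes\mathsf I_3\otimes\mathsf I_{n_x}$. Velocity nodes $v_k$, weights $\omega_k$, $\sum\omega_k=1$, $\sum\omega_kv_k=0$; $\langle\boldsymbol a\rangle=\sum_k\omega_k\boldsymbol a_k$ (e.g. $\langle\boldsymbol g^\top M\boldsymbol g\rangle=\sum_k\omega_k\boldsymbol g_k^\top M\boldsymbol g_k$). $\varepsilon>0$, $\sigma_s>0$, $\sigma_a\ge0$; $\boldsymbol\rho(0),\boldsymbol g_k(0)$ given initial-data vectors. *)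

theory Defs
  imports "Jordan_Normal_Form.Matrix"
begin

definition minv :: "real mat \<Rightarrow> real mat" where
  "minv A = (SOME B. B \<in> carrier_mat (dim_col A) (dim_row A) \<and>
                     A * B = 1\<^sub>m (dim_row A) \<and> B * A = 1\<^sub>m (dim_col A))"

definition kron :: "real mat \<Rightarrow> real mat \<Rightarrow> real mat" where
  "kron A B = mat (dim_row A * dim_row B) (dim_col A * dim_col B)
     (\<lambda>(i,j). A $$ (i div dim_row B, j div dim_col B) * B $$ (i mod dim_row B, j mod dim_col B))"

definition outer :: "real vec \<Rightarrow> real vec \<Rightarrow> real mat" where
  "outer u w = mat (dim_vec u) (dim_vec w) (\<lambda>(i,j). u $ i * w $ j)"

definition col_mat :: "real vec \<Rightarrow> real mat" where
  "col_mat u = mat (dim_vec u) 1 (\<lambda>(i,j). u $ i)"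

definition tL :: "nat \<Rightarrow> real vec" where "tL n = unit_vec (n+1) 0"
definition tR :: "nat \<Rightarrow> real vec" where "tR n = unit_vec (n+1) n"
definition sbpE :: "nat \<Rightarrow> real mat" where
  "sbpE n = outer (tR n) (tR n) - outer (tL n) (tL n)"

definition nodepow :: "nat \<Rightarrow> (nat \<Rightarrow> real) \<Rightarrow> nat \<Rightarrow> real vec" where
  "nodepow n x k = vec (n+1) (\<lambda>i. x i ^ k)"

definition sbp :: "nat \<Rightarrow> (nat \<Rightarrow> real) \<Rightarrow> nat \<Rightarrow> real mat \<Rightarrow> real mat \<Rightarrow> bool" where
  "sbp n x p H Q \<longleftrightarrow>
     1 \<le> n \<and> (\<forall>i<n. x i < x (Suc i)) \<and>
     H \<in> carrier_mat (n+1) (n+1) \<and> Q \<in> carrier_mat (n+1) (n+1) \<and>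
     diagonal_mat H \<and> transpose_mat H = H \<and>
     (\<forall>w \<in> carrier_vec (n+1). w \<noteq> 0\<^sub>v (n+1) \<longrightarrow> 0 < w \<bullet> (H *\<^sub>v w)) \<and>
     Q + transpose_mat Q = sbpE n \<and>
     (\<forall>k\<le>p. (minv H * Q) *\<^sub>v nodepow n x k = real k \<cdot>\<^sub>v nodepow n x (k - 1))"

definition blocks3 :: "nat \<Rightarrow> (nat \<Rightarrow> nat \<Rightarrow> real mat) \<Rightarrow> real mat" where
  "blocks3 m B = mat (3*m) (3*m) (\<lambda>(i,j). B (i div m) (j div m) $$ (i mod m, j mod m))"

text \<open>Periodic global Q over three elements (block indices 0,1,2):
  diagonal blocks S_x; blocks (1,2),(2,3),(3,1) [1-based] equal 1/2 t_R t_L^T;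
  blocks (2,1),(3,2),(1,3) equal -1/2 t_L t_R^T.\<close>
definition QGx :: "nat \<Rightarrow> real mat \<Rightarrow> real mat" where
  "QGx nx Qx = blocks3 (nx+1) (\<lambda>a b.
      if a = b then Qx - (1/2) \<cdot>\<^sub>m sbpE nx
      else if b = (a+1) mod 3 then (1/2) \<cdot>\<^sub>m outer (tR nx) (tL nx)
      else if a = (b+1) mod 3 then (-(1/2)) \<cdot>\<^sub>m outer (tL nx) (tR nx)
      else 0\<^sub>m (nx+1) (nx+1))"

definition DGx :: "nat \<Rightarrow> real mat \<Rightarrow> real mat \<Rightarrow> real mat" where
  "DGx nx Hx Qx = kron (1\<^sub>m 3) (minv Hx) * QGx nx Qx"

definition Dx_st :: "nat \<Rightarrow> nat \<Rightarrow> real mat \<Rightarrow> real mat \<Rightarrow> real mat" where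
  "Dx_st nx nt Hx Qx = kron (1\<^sub>m (nt+1)) (DGx nx Hx Qx)"
definition Dt_st :: "nat \<Rightarrow> nat \<Rightarrow> real mat \<Rightarrow> real mat \<Rightarrow> real mat" where
  "Dt_st nx nt Ht Qt = kron (minv Ht * Qt) (kron (1\<^sub>m 3) (1\<^sub>m (nx+1)))"
definition Ht_st :: "nat \<Rightarrow> real mat \<Rightarrow> real mat" where
  "Ht_st nx Ht = kron Ht (kron (1\<^sub>m 3) (1\<^sub>m (nx+1)))"
definition tB_st :: "nat \<Rightarrow> nat \<Rightarrow> real mat" where
  "tB_st nx nt = kron (col_mat (tL nt)) (kron (1\<^sub>m 3) (1\<^sub>m (nx+1)))"

definition MT :: "nat \<Rightarrow> nat \<Rightarrow> real mat \<Rightarrow> real mat" where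
  "MT nx nt Hx = kron (outer (tR nt) (tR nt)) (kron (1\<^sub>m 3) Hx)"
definition MB :: "nat \<Rightarrow> nat \<Rightarrow> real mat \<Rightarrow> real mat" where
  "MB nx nt Hx = kron (outer (tL nt) (tL nt)) (kron (1\<^sub>m 3) Hx)"

definition vavg :: "nat \<Rightarrow> (nat \<Rightarrow> real) \<Rightarrow> nat \<Rightarrow> (nat \<Rightarrow> real vec) \<Rightarrow> real vec" where
  "vavg nv w N a = vec N (\<lambda>i. \<Sum>k<nv. w k * (a k $ i))"

end

theory Submission
  imports Defs
begin

lemma sum_split_nat: "(\<Sum>k<n*q. (f k::real)) = (\<Sum>a<n. \<Sum>b<q. f (a*q+b :: nat))"
proof (induction n)
  case 0 then show ?case by simp
next
  case (Suc n)
  have "{..<Suc n * q} = {..<n*q} \<union> {n*q..<n*q+q}" by auto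
  then have "(\<Sum>k<Suc n*q. f k) = (\<Sum>k<n*q. f k) + (\<Sum>k\<in>{n*q..<n*q+q}. f k)"
    by (simp add: sum.union_disjoint ivl_disj_int)
  also have "(\<Sum>k\<in>{n*q..<n*q+q}. f k) = (\<Sum>b<q. f (n*q+b))"
    using sum.shift_bounds_nat_ivl[of f 0 "n*q" q] by (simp add: lessThan_atLeast0 add.commute)
  finally show ?case using Suc by simp
qed

lemma kron_carrier[simp]: "kron A B \<in> carrier_mat (dim_row A * dim_row B) (dim_col A * dim_col B)"
  by (simp add: kron_def)
lemma kron_dims[simp]: "dim_row (kron A B) = dim_row A * dim_row B" "dim_col (kron A B) = dim_col A * dim_col B"
  by (simp_all add: kron_def)
lemma kron_index[simp]: "i < dim_row A * dim_row B \<Longrightarrow> j < dim_col A * dim_col B \<Longrightarrow>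
  kron A B $$ (i,j) = A $$ (i div dim_row B, j div dim_col B) * B $$ (i mod dim_row B, j mod dim_col B)"
  by (simp add: kron_def)

lemma div_mod_less: "i < n * (q::nat) \<Longrightarrow> i div q < n \<and> i mod q < q"
  by (metis less_mult_imp_div_less mod_less_divisor mult_zero_right not_less_zero gr0I)

lemma kron_mult:
  assumes A: "A \<in> carrier_mat m n" and B: "B \<in> carrier_mat p q"
    and C: "C \<in> carrier_mat n r" and D: "D \<in> carrier_mat q s"
  shows "kron A B * kron C D = kron (A*C) (B*D)"
proof (rule eq_matI)
  fix i j assume i: "i < dim_row (kron (A*C) (B*D))" and j: "j < dim_col (kron (A*C) (B*D))"
  have i': "i < m*p" and j': "j < r*s" using i j A B C D by auto
  have id: "i div p < m" "i mod p < p" "j div s < r" "j mod s < s" using div_mod_less[OF i'] div_mod_less[OF j'] by auto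
  have "(kron A B * kron C D) $$ (i,j) = row (kron A B) i \<bullet> col (kron C D) j"
    using i' j' A B C D by simp
  also have "\<dots> = (\<Sum>k<n*q. A $$ (i div p, k div q) * B $$ (i mod p, k mod q) * (C $$ (k div q, j div s) * D $$ (k mod q, j mod s)))"
    using i' j' A B C D by (simp add: scalar_prod_def lessThan_atLeast0 div_mod_less)
  also have "\<dots> = (\<Sum>a<n. \<Sum>b<q. A $$ (i div p, a) * B $$ (i mod p, b) * (C $$ (a, j div s) * D $$ (b, j mod s)))"
    by (simp add: sum_split_nat)
  also have "\<dots> = (\<Sum>a<n. A $$ (i div p, a) * C $$ (a, j div s)) * (\<Sum>b<q. B $$ (i mod p, b) * D $$ (b, j mod s))"
    by (simp add: sum_product mult_ac)
  also have "\<dots> = (A*C) $$ (i div p, j div s) * (B*D) $$ (i mod p, j mod s)"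
    using id A B C D by (simp add: scalar_prod_def lessThan_atLeast0)
  also have "\<dots> = kron (A*C) (B*D) $$ (i,j)" using i' j' A B C D by simp
  finally show "(kron A B * kron C D) $$ (i,j) = kron (A*C) (B*D) $$ (i,j)" .
qed (use assms in auto)

lemma kron_one: "kron (1\<^sub>m a) (1\<^sub>m b) = 1\<^sub>m (a*b)"
proof (rule eq_matI)
  fix i j assume "i < dim_row (1\<^sub>m (a*b))" "j < dim_col (1\<^sub>m (a*b))"
  then have i: "i < a*b" and j: "j < a*b" by auto
  have "(i div b = j div b \<and> i mod b = j mod b) = (i = j)"
    by (metis div_mult_mod_eq)
  then show "kron (1\<^sub>m a) (1\<^sub>m b) $$ (i, j) = 1\<^sub>m (a*b) $$ (i, j)"
    using i j div_mod_less[OF i] div_mod_less[OF j] by auto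
qed auto

lemma kron_transpose: "transpose_mat (kron A B) = kron (transpose_mat A) (transpose_mat B)"
  by (rule eq_matI) (auto simp: div_mod_less)

lemma minv_unique:
  assumes A: "A \<in> carrier_mat n n" and B: "B \<in> carrier_mat n n" and AB: "A * B = 1\<^sub>m n" and BA: "B * A = 1\<^sub>m n"
  shows "minv A = B"
proof -
  have ex: "B \<in> carrier_mat (dim_col A) (dim_row A) \<and> A * B = 1\<^sub>m (dim_row A) \<and> B * A = 1\<^sub>m (dim_col A)"
    using A B AB BA by auto
  define C where "C = minv A"
  have C: "C \<in> carrier_mat n n" "A * C = 1\<^sub>m n" "C * A = 1\<^sub>m n"
    using someI[of "\<lambda>B. B \<in> carrier_mat (dim_col A) (dim_row A) \<and> A * B = 1\<^sub>m (dim_row A) \<and> B * A = 1\<^sub>m (dim_col A)", OF ex] A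
    unfolding C_def minv_def by auto
  have "C * (A * B) = C" using C AB by simp
  then have "C = C * (A * B)" by simp
  also have "\<dots> = (C * A) * B" using assoc_mult_mat[of C n n A n B n] A B C(1) by simp
  also have "\<dots> = B" using C B by simp
  finally show ?thesis unfolding C_def .
qed


lemma diag_form:
  fixes M :: "real mat"
  assumes M: "M \<in> carrier_mat n n" and d: "diagonal_mat M" and u: "u \<in> carrier_vec n" and z: "z \<in> carrier_vec n"
  shows "u \<bullet> (M *\<^sub>v z) = (\<Sum>i<n. M $$ (i,i) * (u$i * z$i))"
proof -
  have "u \<bullet> (M *\<^sub>v z) = (\<Sum>i<n. u$i * (\<Sum>j<n. M $$ (i,j) * z$j))"
    using M u z by (simp add: scalar_prod_def lessThan_atLeast0 mult_mat_vec_def)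
  also have "\<dots> = (\<Sum>i<n. M $$ (i,i) * (u$i * z$i))"
  proof (rule sum.cong[OF refl])
    fix i assume i: "i \<in> {..<n}"
    have "(\<Sum>j<n. M $$ (i,j) * z$j) = (\<Sum>j<n. if j = i then M $$ (i,i) * z$i else 0)"
      by (rule sum.cong[OF refl]) (use d M i in \<open>auto simp: diagonal_mat_def\<close>)
    also have "\<dots> = M $$ (i,i) * z$i" using i by simp
    finally show "u$i * (\<Sum>j<n. M $$ (i,j) * z$j) = M $$ (i,i) * (u$i * z$i)" by (simp add: mult_ac)
  qed
  finally show ?thesis .
qed

lemma sbp_facts:
  assumes "sbp n x p H Q"
  shows "H \<in> carrier_mat (n+1) (n+1)" "Q \<in> carrier_mat (n+1) (n+1)" "diagonal_mat H"
    "\<And>i. i < n+1 \<Longrightarrow> 0 < H $$ (i,i)" "Q + transpose_mat Q = sbpE n"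
proof -
  show H: "H \<in> carrier_mat (n+1) (n+1)" and "Q \<in> carrier_mat (n+1) (n+1)" and d: "diagonal_mat H"
    and "Q + transpose_mat Q = sbpE n" using assms by (auto simp: sbp_def)
  fix i assume i: "i < n+1"
  have pd: "\<forall>w \<in> carrier_vec (n+1). w \<noteq> 0\<^sub>v (n+1) \<longrightarrow> 0 < w \<bullet> (H *\<^sub>v w)" using assms by (simp add: sbp_def)
  have "unit_vec (n+1) i \<noteq> 0\<^sub>v (n+1)" using i by simp
  then have "0 < unit_vec (n+1) i \<bullet> (H *\<^sub>v unit_vec (n+1) i)" using pd unit_vec_carrier by blast
  also have "unit_vec (n+1) i \<bullet> (H *\<^sub>v unit_vec (n+1) i) = (\<Sum>k<n+1. H$$(k,k) * (unit_vec (n+1) i $ k * unit_vec (n+1) i $ k))"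
    by (rule diag_form[OF H d]) auto
  also have "\<dots> = (\<Sum>k<n+1. if k = i then H $$ (i,i) else 0)"
    by (rule sum.cong[OF refl]) (auto simp: unit_vec_def)
  also have "\<dots> = H $$ (i,i)" using i by simp
  finally show "0 < H $$ (i,i)" .
qed

lemma diag_inv:
  assumes H: "H \<in> carrier_mat n n" and d: "diagonal_mat H" and nz: "\<And>i. i < n \<Longrightarrow> H $$ (i,i) \<noteq> 0"
  shows "minv H \<in> carrier_mat n n" "H * minv H = 1\<^sub>m n" "minv H * H = 1\<^sub>m n"
proof -
  define D where "D = mat n n (\<lambda>(i,j). if i = j then 1 / H $$ (i,i) else 0)"
  have D: "D \<in> carrier_mat n n" by (simp add: D_def)
  have HD: "H * D = 1\<^sub>m n"
  proof (rule eq_matI)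
    fix i j assume "i < dim_row (1\<^sub>m n)" "j < dim_col (1\<^sub>m n)"
    then have i: "i < n" and j: "j < n" by auto
    have "(H * D) $$ (i,j) = (\<Sum>k<n. H $$ (i,k) * D $$ (k,j))"
      using H D i j by (simp add: scalar_prod_def lessThan_atLeast0)
    also have "\<dots> = (\<Sum>k<n. if k = j then H $$ (i,j) / H $$ (j,j) else 0)"
      by (rule sum.cong[OF refl]) (use j in \<open>auto simp: D_def\<close>)
    also have "\<dots> = 1\<^sub>m n $$ (i,j)" using i j d H nz[OF j] by (auto simp: diagonal_mat_def)
    finally show "(H * D) $$ (i,j) = 1\<^sub>m n $$ (i,j)" .
  qed (use H D in auto)
  have DH: "D * H = 1\<^sub>m n"
  proof (rule eq_matI)
    fix i j assume "i < dim_row (1\<^sub>m n)" "j < dim_col (1\<^sub>m n)"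
    then have i: "i < n" and j: "j < n" by auto
    have "(D * H) $$ (i,j) = (\<Sum>k<n. D $$ (i,k) * H $$ (k,j))"
      using H D i j by (simp add: scalar_prod_def lessThan_atLeast0)
    also have "\<dots> = (\<Sum>k<n. if k = i then H $$ (i,j) / H $$ (i,i) else 0)"
      by (rule sum.cong[OF refl]) (use i in \<open>auto simp: D_def\<close>)
    also have "\<dots> = 1\<^sub>m n $$ (i,j)" using i j d H nz[OF i] by (auto simp: diagonal_mat_def)
    finally show "(D * H) $$ (i,j) = 1\<^sub>m n $$ (i,j)" .
  qed (use H D in auto)
  have "minv H = D" by (rule minv_unique[OF H D HD DH])
  then show "minv H \<in> carrier_mat n n" "H * minv H = 1\<^sub>m n" "minv H * H = 1\<^sub>m n" using D HD DH by auto
qed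

lemma kron_diag:
  assumes "diagonal_mat A" "diagonal_mat B" "A \<in> carrier_mat m m" "B \<in> carrier_mat p p"
  shows "diagonal_mat (kron A B)"
  unfolding diagonal_mat_def
proof (intro allI impI)
  fix i j assume i: "i < dim_row (kron A B)" and j: "j < dim_col (kron A B)" and ij: "i \<noteq> j"
  have "i div p \<noteq> j div p \<or> i mod p \<noteq> j mod p" using ij by (metis div_mult_mod_eq)
  then show "kron A B $$ (i,j) = 0" using i j assms div_mod_less[of i m p] div_mod_less[of j m p]
    by (auto simp: diagonal_mat_def)
qed

lemma bil_expand:
  fixes A :: "real mat"
  assumes A: "A \<in> carrier_mat n n" and u: "u \<in> carrier_vec n" and z: "z \<in> carrier_vec n"
  shows "u \<bullet> (A *\<^sub>v z) = (\<Sum>i<n. \<Sum>j<n. u$i * A$$(i,j) * z$j)"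
  using A u z by (simp add: scalar_prod_def lessThan_atLeast0 mult_mat_vec_def sum_distrib_left mult_ac)

lemma antisym_form:
  fixes A :: "real mat"
  assumes A: "A \<in> carrier_mat n n" and anti: "\<And>i j. i < n \<Longrightarrow> j < n \<Longrightarrow> A $$ (j,i) = - A $$ (i,j)"
    and u: "u \<in> carrier_vec n" and z: "z \<in> carrier_vec n"
  shows "u \<bullet> (A *\<^sub>v z) = - (z \<bullet> (A *\<^sub>v u))"
proof -
  have "z \<bullet> (A *\<^sub>v u) = (\<Sum>i<n. \<Sum>j<n. z$i * A$$(i,j) * u$j)" by (rule bil_expand[OF A z u])
  also have "\<dots> = (\<Sum>j<n. \<Sum>i<n. z$i * A$$(i,j) * u$j)" by (rule sum.swap)
  also have "\<dots> = (\<Sum>j<n. \<Sum>i<n. - (u$j * A$$(j,i) * z$i))"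
  proof (intro sum.cong refl)
    fix i j assume "j \<in> {..<n}" "i \<in> {..<n}"
    then have "A$$(i,j) = - A$$(j,i)" using anti[of j i] by simp
    then show "z$i * A$$(i,j) * u$j = - (u$j * A$$(j,i) * z$i)" by simp
  qed
  also have "\<dots> = - (u \<bullet> (A *\<^sub>v z))" by (simp add: bil_expand[OF A u z] sum_negf)
  finally show ?thesis by simp
qed

lemma sym_part_form:
  fixes K :: "real mat"
  assumes K: "K \<in> carrier_mat n n" and S: "S \<in> carrier_mat n n" and KS: "K + transpose_mat K = S"
    and u: "u \<in> carrier_vec n"
  shows "u \<bullet> (K *\<^sub>v u) = (1/2) * (u \<bullet> (S *\<^sub>v u))"
proof -
  have "u \<bullet> (transpose_mat K *\<^sub>v u) = (K *\<^sub>v u) \<bullet> u"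
    using transpose_vec_mult_scalar[of "transpose_mat K" n n u u] K u by simp
  also have "\<dots> = u \<bullet> (K *\<^sub>v u)" using K u by (intro comm_scalar_prod[of _ n]) auto
  finally have t: "u \<bullet> (transpose_mat K *\<^sub>v u) = u \<bullet> (K *\<^sub>v u)" .
  have "u \<bullet> (S *\<^sub>v u) = u \<bullet> (K *\<^sub>v u + transpose_mat K *\<^sub>v u)"
    using K u by (simp add: KS[symmetric] add_mult_distrib_mat_vec[of _ n n])
  also have "\<dots> = u \<bullet> (K *\<^sub>v u) + u \<bullet> (transpose_mat K *\<^sub>v u)"
    using K u by (simp add: scalar_prod_add_distrib[of _ n])
  finally show ?thesis using t by linarith
qed

lemma outer_index[simp]: "i < dim_vec a \<Longrightarrow> j < dim_vec b \<Longrightarrow> outer a b $$ (i,j) = a$i * b$j"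
  by (simp add: outer_def)
lemma outer_carrier[simp]: "outer a b \<in> carrier_mat (dim_vec a) (dim_vec b)"
  "dim_row (outer a b) = dim_vec a" "dim_col (outer a b) = dim_vec b"
  by (auto simp: outer_def)

lemma sbpE_carrier[simp]: "sbpE n \<in> carrier_mat (n+1) (n+1)" "dim_row (sbpE n) = n+1" "dim_col (sbpE n) = n+1"
  by (auto simp: sbpE_def tR_def tL_def)
lemma sbpE_index: "i < n+1 \<Longrightarrow> j < n+1 \<Longrightarrow> sbpE n $$ (i,j) =
   (if i = n \<and> j = n then 1 else 0) - (if i = 0 \<and> j = 0 then 1 else 0)"
  by (simp add: sbpE_def tR_def tL_def unit_vec_def)

lemma QG_carrier[simp]: "QGx nx Qx \<in> carrier_mat (3*(nx+1)) (3*(nx+1))"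
  by (simp add: QGx_def blocks3_def)

lemma QG_anti:
  assumes Q: "Qx \<in> carrier_mat (nx+1) (nx+1)" and QE: "Qx + transpose_mat Qx = sbpE nx"
    and i: "i < 3*(nx+1)" and j: "j < 3*(nx+1)"
  shows "QGx nx Qx $$ (j,i) = - QGx nx Qx $$ (i,j)"
proof -
  let ?m = "nx+1"
  have a: "i div ?m < 3" "i mod ?m < ?m" and b: "j div ?m < 3" "j mod ?m < ?m"
    using div_mod_less[OF i] div_mod_less[OF j] by auto
  have qe: "Qx $$ (p,q) + Qx $$ (q,p) = sbpE nx $$ (p,q)" if "p < ?m" "q < ?m" for p q
  proof -
    have "(Qx + transpose_mat Qx) $$ (p,q) = sbpE nx $$ (p,q)" using QE by simp
    then show ?thesis using that Q by simp
  qed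
  have es: "sbpE nx $$ (p,q) = sbpE nx $$ (q,p)" if "p < ?m" "q < ?m" for p q
    using that by (simp add: sbpE_index)
  have diag: "(Qx - (1/2) \<cdot>\<^sub>m sbpE nx) $$ (q,p) = - (Qx - (1/2) \<cdot>\<^sub>m sbpE nx) $$ (p,q)"
    if "p < ?m" "q < ?m" for p q
    using that Q qe[OF that] es[OF that] qe[of q p] by (simp add: algebra_simps)
  let ?B = "(\<lambda>a b.
      if a = b then Qx - (1/2) \<cdot>\<^sub>m sbpE nx
      else if b = (a+1) mod 3 then (1/2) \<cdot>\<^sub>m outer (tR nx) (tL nx)
      else if a = (b+1) mod 3 then (-(1/2)) \<cdot>\<^sub>m outer (tL nx) (tR nx)
      else 0\<^sub>m (nx+1) (nx+1))"
  have QGi: "QGx nx Qx $$ (p,q) = ?B (p div ?m) (q div ?m) $$ (p mod ?m, q mod ?m)"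
    if "p < 3*?m" "q < 3*?m" for p q
    using that unfolding QGx_def blocks3_def by simp
  have key: "?B bb aa $$ (q,p) = - ?B aa bb $$ (p,q)" if "aa < 3" "bb < 3" "p < ?m" "q < ?m" for aa bb p q :: nat
  proof -
    have o1: "outer (tR nx) (tL nx) $$ (p,q) = (if p = nx \<and> q = 0 then 1 else 0)"
      "outer (tL nx) (tR nx) $$ (q,p) = (if p = nx \<and> q = 0 then 1 else 0)"
      "outer (tR nx) (tL nx) $$ (q,p) = (if q = nx \<and> p = 0 then 1 else 0)"
      "outer (tL nx) (tR nx) $$ (p,q) = (if q = nx \<and> p = 0 then 1 else 0)"
      using that by (auto simp: tR_def tL_def)
    have c3: "aa = 0 \<or> aa = 1 \<or> aa = 2" "bb = 0 \<or> bb = 1 \<or> bb = 2" using that by auto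
    show ?thesis
    proof (cases "aa = bb")
      case True then show ?thesis using diag[OF that(3,4)] by simp
    next
      case False
      then show ?thesis using c3 that o1 by (elim disjE) (auto simp: tR_def tL_def)
    qed
  qed
  show ?thesis using QGi[OF i j] QGi[OF j i] key[OF a(1) b(1) a(2) b(2)] by simp
qed

lemma col_outer: "col_mat u * transpose_mat (col_mat u) = outer u u"
  by (rule eq_matI) (auto simp: col_mat_def outer_def scalar_prod_def)

lemma col_mat_carrier[simp]: "col_mat u \<in> carrier_mat (dim_vec u) 1"
  by (simp add: col_mat_def)

lemma kron_carrier': "A \<in> carrier_mat a b \<Longrightarrow> B \<in> carrier_mat c d \<Longrightarrow> kron A B \<in> carrier_mat (a*c) (b*d)"
  using kron_carrier[of A B] by auto

lemma mats:
  assumes Hx: "Hx \<in> carrier_mat (nx+1) (nx+1)" and Ht: "Ht \<in> carrier_mat (nt+1) (nt+1)"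
    and Qt: "Qt \<in> carrier_mat (nt+1) (nt+1)"
    and iHx: "minv Hx \<in> carrier_mat (nx+1) (nx+1)" "Hx * minv Hx = 1\<^sub>m (nx+1)"
    and iHt: "minv Ht \<in> carrier_mat (nt+1) (nt+1)" "Ht * minv Ht = 1\<^sub>m (nt+1)" "minv Ht * Ht = 1\<^sub>m (nt+1)"
  defines "P \<equiv> kron (1\<^sub>m 3) Hx"
  shows "kron Ht P * Dt_st nx nt Ht Qt = kron Qt P"
    and "kron Ht P * Dx_st nx nt Hx Qx = kron Ht (QGx nx Qx)"
    and "kron Ht P * (minv (Ht_st nx Ht) * tB_st nx nt * transpose_mat (tB_st nx nt)) = MB nx nt Hx"
    and "Dt_st nx nt Ht Qt \<in> carrier_mat ((nt+1)*(3*(nx+1))) ((nt+1)*(3*(nx+1)))"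
    and "Dx_st nx nt Hx Qx \<in> carrier_mat ((nt+1)*(3*(nx+1))) ((nt+1)*(3*(nx+1)))"
    and "minv (Ht_st nx Ht) * tB_st nx nt * transpose_mat (tB_st nx nt) \<in> carrier_mat ((nt+1)*(3*(nx+1))) ((nt+1)*(3*(nx+1)))"
proof -
  let ?m = "nx+1" and ?T = "nt+1" and ?M = "3*(nx+1)"
  have I1: "kron (1\<^sub>m 3) (1\<^sub>m ?m) = 1\<^sub>m ?M" by (simp add: kron_one)
  have P: "P \<in> carrier_mat ?M ?M" using Hx unfolding P_def
    using kron_carrier'[of "1\<^sub>m 3" _ _ Hx] by auto
  have iHtQt: "minv Ht * Qt \<in> carrier_mat ?T ?T" using iHt Qt by auto
  have Dt: "Dt_st nx nt Ht Qt = kron (minv Ht * Qt) (1\<^sub>m ?M)" by (simp only: Dt_st_def I1)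
  show "Dt_st nx nt Ht Qt \<in> carrier_mat (?T*?M) (?T*?M)"
    unfolding Dt by (intro kron_carrier') (use iHtQt in auto)
  have "kron Ht P * Dt_st nx nt Ht Qt = kron (Ht * (minv Ht * Qt)) (P * 1\<^sub>m ?M)"
    unfolding Dt by (rule kron_mult[OF Ht P iHtQt one_carrier_mat])
  also have "Ht * (minv Ht * Qt) = Qt"
    using assoc_mult_mat[of Ht ?T ?T "minv Ht" ?T Qt ?T] Ht iHt Qt by simp
  also have "P * 1\<^sub>m ?M = P" using P by simp
  finally show "kron Ht P * Dt_st nx nt Ht Qt = kron Qt P" .
  have QG: "QGx nx Qx \<in> carrier_mat ?M ?M" by (rule QG_carrier)
  have kiH: "kron (1\<^sub>m 3) (minv Hx) \<in> carrier_mat ?M ?M"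
    by (intro kron_carrier') (use iHx in auto)
  have DG: "DGx nx Hx Qx \<in> carrier_mat ?M ?M" unfolding DGx_def using kiH QG by auto
  show "Dx_st nx nt Hx Qx \<in> carrier_mat (?T*?M) (?T*?M)"
    unfolding Dx_st_def by (intro kron_carrier') (use DG in auto)
  have "P * DGx nx Hx Qx = (P * kron (1\<^sub>m 3) (minv Hx)) * QGx nx Qx"
    unfolding DGx_def using assoc_mult_mat[of P ?M ?M _ ?M "QGx nx Qx" ?M] P kiH QG by simp
  also have "P * kron (1\<^sub>m 3) (minv Hx) = kron (1\<^sub>m 3 * 1\<^sub>m 3) (Hx * minv Hx)"
    unfolding P_def by (rule kron_mult[OF one_carrier_mat Hx one_carrier_mat iHx(1)])
  also have "\<dots> = 1\<^sub>m ?M" using iHx by (simp add: kron_one)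
  finally have PD: "P * DGx nx Hx Qx = QGx nx Qx" using QG by simp
  have "kron Ht P * Dx_st nx nt Hx Qx = kron (Ht * 1\<^sub>m ?T) (P * DGx nx Hx Qx)"
    unfolding Dx_st_def by (rule kron_mult[OF Ht P one_carrier_mat DG])
  then show "kron Ht P * Dx_st nx nt Hx Qx = kron Ht (QGx nx Qx)" using PD Ht by simp
  have Hts: "Ht_st nx Ht = kron Ht (1\<^sub>m ?M)" by (simp only: Ht_st_def I1)
  have iHts: "minv (Ht_st nx Ht) = kron (minv Ht) (1\<^sub>m ?M)"
  proof -
    have c1: "kron Ht (1\<^sub>m ?M) \<in> carrier_mat (?T*?M) (?T*?M)" by (intro kron_carrier') (use Ht in auto)
    have c2: "kron (minv Ht) (1\<^sub>m ?M) \<in> carrier_mat (?T*?M) (?T*?M)" by (intro kron_carrier') (use iHt in auto)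
    have "kron Ht (1\<^sub>m ?M) * kron (minv Ht) (1\<^sub>m ?M) = kron (Ht * minv Ht) (1\<^sub>m ?M * 1\<^sub>m ?M)"
      by (rule kron_mult[OF Ht one_carrier_mat iHt(1) one_carrier_mat])
    also have "\<dots> = 1\<^sub>m (?T*?M)" using iHt by (simp add: kron_one)
    finally have e1: "kron Ht (1\<^sub>m ?M) * kron (minv Ht) (1\<^sub>m ?M) = 1\<^sub>m (?T*?M)" .
    have "kron (minv Ht) (1\<^sub>m ?M) * kron Ht (1\<^sub>m ?M) = kron (minv Ht * Ht) (1\<^sub>m ?M * 1\<^sub>m ?M)"
      by (rule kron_mult[OF iHt(1) one_carrier_mat Ht one_carrier_mat])
    also have "\<dots> = 1\<^sub>m (?T*?M)" using iHt by (simp add: kron_one)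
    finally have e2: "kron (minv Ht) (1\<^sub>m ?M) * kron Ht (1\<^sub>m ?M) = 1\<^sub>m (?T*?M)" .
    show ?thesis unfolding Hts by (rule minv_unique[OF c1 c2 e1 e2])
  qed
  have tB: "tB_st nx nt = kron (col_mat (tL nt)) (1\<^sub>m ?M)" by (simp only: tB_st_def I1)
  have col: "col_mat (tL nt) \<in> carrier_mat ?T 1" using col_mat_carrier[of "tL nt"] by (simp add: tL_def)
  have colT: "transpose_mat (col_mat (tL nt)) \<in> carrier_mat 1 ?T" using col by auto
  have tBT: "transpose_mat (tB_st nx nt) = kron (transpose_mat (col_mat (tL nt))) (1\<^sub>m ?M)"
    by (simp add: tB kron_transpose)
  have c_iHts: "minv (Ht_st nx Ht) \<in> carrier_mat (?T*?M) (?T*?M)"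
    unfolding iHts by (intro kron_carrier') (use iHt in auto)
  have c_tB: "tB_st nx nt \<in> carrier_mat (?T*?M) (1*?M)"
    unfolding tB by (intro kron_carrier') (use col in auto)
  have c_tBT: "transpose_mat (tB_st nx nt) \<in> carrier_mat (1*?M) (?T*?M)"
    using c_tB by auto
  show "minv (Ht_st nx Ht) * tB_st nx nt * transpose_mat (tB_st nx nt) \<in> carrier_mat (?T*?M) (?T*?M)"
    using c_iHts c_tB c_tBT by auto
  have kHP: "kron Ht P \<in> carrier_mat (?T*?M) (?T*?M)" by (intro kron_carrier') (use Ht P in auto)
  have "kron Ht P * (minv (Ht_st nx Ht) * tB_st nx nt * transpose_mat (tB_st nx nt))
      = ((kron Ht P * minv (Ht_st nx Ht)) * tB_st nx nt) * transpose_mat (tB_st nx nt)"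
  proof -
    have yz: "minv (Ht_st nx Ht) * tB_st nx nt \<in> carrier_mat (?T*?M) (1*?M)" using c_iHts c_tB by auto
    have "kron Ht P * ((minv (Ht_st nx Ht) * tB_st nx nt) * transpose_mat (tB_st nx nt))
       = (kron Ht P * (minv (Ht_st nx Ht) * tB_st nx nt)) * transpose_mat (tB_st nx nt)"
      by (rule assoc_mult_mat[OF kHP yz c_tBT, symmetric])
    also have "kron Ht P * (minv (Ht_st nx Ht) * tB_st nx nt) = (kron Ht P * minv (Ht_st nx Ht)) * tB_st nx nt"
      by (rule assoc_mult_mat[OF kHP c_iHts c_tB, symmetric])
    finally show ?thesis .
  qed
  also have "kron Ht P * minv (Ht_st nx Ht) = kron (Ht * minv Ht) (P * 1\<^sub>m ?M)"
    unfolding iHts by (rule kron_mult[OF Ht P iHt(1) one_carrier_mat])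
  also have "\<dots> = kron (1\<^sub>m ?T) P" using iHt P by simp
  also have "kron (1\<^sub>m ?T) P * tB_st nx nt = kron (1\<^sub>m ?T * col_mat (tL nt)) (P * 1\<^sub>m ?M)"
    unfolding tB by (rule kron_mult[OF one_carrier_mat P col one_carrier_mat])
  also have "\<dots> = kron (col_mat (tL nt)) P" using col P by simp
  also have "kron (col_mat (tL nt)) P * transpose_mat (tB_st nx nt)
      = kron (col_mat (tL nt) * transpose_mat (col_mat (tL nt))) (P * 1\<^sub>m ?M)"
    unfolding tBT by (rule kron_mult[OF col P colT one_carrier_mat])
  also have "\<dots> = kron (outer (tL nt) (tL nt)) P"
  proof -
    have PP: "P * 1\<^sub>m ?M = P" using P by simp
    show ?thesis by (simp only: col_outer PP)
  qed
  also have "\<dots> = MB nx nt Hx" unfolding MB_def P_def by (rule refl)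
  finally show "kron Ht P * (minv (Ht_st nx Ht) * tB_st nx nt * transpose_mat (tB_st nx nt)) = MB nx nt Hx" .
qed

lemma diag_sym: "diagonal_mat A \<Longrightarrow> A \<in> carrier_mat n n \<Longrightarrow> i < n \<Longrightarrow> j < n \<Longrightarrow> A $$ (i,j) = A $$ (j,i)"
  by (cases "i = j") (auto simp: diagonal_mat_def)

lemma Pfacts:
  assumes Hx: "Hx \<in> carrier_mat (nx+1) (nx+1)" and d: "diagonal_mat Hx" and pos: "\<And>i. i < nx+1 \<Longrightarrow> 0 < Hx $$ (i,i)"
  shows "kron (1\<^sub>m 3) Hx \<in> carrier_mat (3*(nx+1)) (3*(nx+1))" "diagonal_mat (kron (1\<^sub>m 3) Hx)"
    "\<And>i. i < 3*(nx+1) \<Longrightarrow> 0 < kron (1\<^sub>m 3) Hx $$ (i,i)"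
proof -
  show "kron (1\<^sub>m 3) Hx \<in> carrier_mat (3*(nx+1)) (3*(nx+1))" using Hx kron_carrier[of "1\<^sub>m 3" Hx] by auto
  show "diagonal_mat (kron (1\<^sub>m 3) Hx)" by (rule kron_diag[OF _ d _ Hx]) (auto simp: diagonal_mat_def)
  fix i assume i: "i < 3*(nx+1)"
  then show "0 < kron (1\<^sub>m 3) Hx $$ (i,i)" using Hx pos div_mod_less[OF i] by simp
qed

lemma kdiag:
  assumes A: "A \<in> carrier_mat a a" and dA: "diagonal_mat A" and B: "B \<in> carrier_mat b b" and dB: "diagonal_mat B"
  shows "kron A B \<in> carrier_mat (a*b) (a*b)" "diagonal_mat (kron A B)"
    "\<And>i. i < a*b \<Longrightarrow> kron A B $$ (i,i) = A $$ (i div b, i div b) * B $$ (i mod b, i mod b)"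
proof -
  show "kron A B \<in> carrier_mat (a*b) (a*b)" using A B kron_carrier[of A B] by auto
  show "diagonal_mat (kron A B)" by (rule kron_diag[OF dA dB A B])
  fix i assume "i < a*b" then show "kron A B $$ (i,i) = A $$ (i div b, i div b) * B $$ (i mod b, i mod b)"
    using A B by simp
qed

lemma outer_diag: "diagonal_mat (outer (unit_vec n k) (unit_vec n k))"
  by (auto simp: diagonal_mat_def outer_def unit_vec_def)

lemma T_form:
  fixes Qt P :: "real mat"
  assumes Qt: "Qt \<in> carrier_mat (nt+1) (nt+1)" and QE: "Qt + transpose_mat Qt = sbpE nt"
    and P: "P \<in> carrier_mat M M" and dP: "diagonal_mat P"
    and u: "u \<in> carrier_vec ((nt+1)*M)"
  shows "u \<bullet> (kron Qt P *\<^sub>v u) = (1/2) * (u \<bullet> (kron (outer (tR nt) (tR nt)) P *\<^sub>v u)) - (1/2) * (u \<bullet> (kron (outer (tL nt) (tL nt)) P *\<^sub>v u))"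
proof -
  let ?n = "(nt+1)*M"
  have K: "kron Qt P \<in> carrier_mat ?n ?n" using Qt P kron_carrier[of Qt P] by auto
  have c1: "kron (outer (tR nt) (tR nt)) P \<in> carrier_mat ?n ?n" using P kron_carrier[of "outer (tR nt) (tR nt)" P] by (auto simp: tR_def)
  have c2: "kron (outer (tL nt) (tL nt)) P \<in> carrier_mat ?n ?n" using P kron_carrier[of "outer (tL nt) (tL nt)" P] by (auto simp: tL_def)
  have S: "kron Qt P + transpose_mat (kron Qt P) = kron (outer (tR nt) (tR nt)) P - kron (outer (tL nt) (tL nt)) P"
  proof (rule eq_matI)
    fix i j assume i: "i < dim_row (kron (outer (tR nt) (tR nt)) P - kron (outer (tL nt) (tL nt)) P)"
      and j: "j < dim_col (kron (outer (tR nt) (tR nt)) P - kron (outer (tL nt) (tL nt)) P)"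
    have i': "i < ?n" and j': "j < ?n" using i j c2 by auto
    note di = div_mod_less[OF i'] and dj = div_mod_less[OF j']
    have qe: "Qt $$ (p,q) + Qt $$ (q,p) = sbpE nt $$ (p,q)" if "p < nt+1" "q < nt+1" for p q
    proof -
      have "(Qt + transpose_mat Qt) $$ (p,q) = sbpE nt $$ (p,q)" using QE by simp
      then show ?thesis using that Qt by simp
    qed
    have ps: "P $$ (j mod M, i mod M) = P $$ (i mod M, j mod M)"
      using diag_sym[OF dP P] di dj by auto
    have "(kron Qt P + transpose_mat (kron Qt P)) $$ (i,j) = (Qt $$ (i div M, j div M) + Qt $$ (j div M, i div M)) * P $$ (i mod M, j mod M)"
      using i' j' K Qt P ps by (simp add: algebra_simps)
    also have "\<dots> = sbpE nt $$ (i div M, j div M) * P $$ (i mod M, j mod M)" using qe di dj by simp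
    also have "\<dots> = (kron (outer (tR nt) (tR nt)) P - kron (outer (tL nt) (tL nt)) P) $$ (i,j)"
      using i' j' P c1 c2 di dj by (simp add: sbpE_index tR_def tL_def algebra_simps)
    finally show "(kron Qt P + transpose_mat (kron Qt P)) $$ (i,j) = (kron (outer (tR nt) (tR nt)) P - kron (outer (tL nt) (tL nt)) P) $$ (i,j)" .
  qed (use K c1 c2 Qt P in \<open>auto simp: tL_def\<close>)
  have "u \<bullet> (kron Qt P *\<^sub>v u) = (1/2) * (u \<bullet> ((kron (outer (tR nt) (tR nt)) P - kron (outer (tL nt) (tL nt)) P) *\<^sub>v u))"
    by (rule sym_part_form[OF K minus_carrier_mat[OF c2] S u])
  also have "\<dots> = (1/2) * (u \<bullet> (kron (outer (tR nt) (tR nt)) P *\<^sub>v u)) - (1/2) * (u \<bullet> (kron (outer (tL nt) (tL nt)) P *\<^sub>v u))"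
    unfolding minus_mult_distrib_mat_vec[OF c1 c2 u]
    using scalar_prod_minus_distrib[OF u mult_mat_vec_carrier[OF c1 u] mult_mat_vec_carrier[OF c2 u]]
    by (simp add: algebra_simps)
  finally show ?thesis .
qed

lemma QG_dims[simp]: "dim_row (QGx nx Qx) = 3*(nx+1)" "dim_col (QGx nx Qx) = 3*(nx+1)"
  using QG_carrier[of nx Qx] by auto

lemma A_anti:
  fixes Ht :: "real mat"
  assumes Ht: "Ht \<in> carrier_mat (nt+1) (nt+1)" and dHt: "diagonal_mat Ht"
    and Q: "Qx \<in> carrier_mat (nx+1) (nx+1)" and QE: "Qx + transpose_mat Qx = sbpE nx"
    and i: "i < (nt+1)*(3*(nx+1))" and j: "j < (nt+1)*(3*(nx+1))"
  shows "kron Ht (QGx nx Qx) $$ (j,i) = - kron Ht (QGx nx Qx) $$ (i,j)"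
proof -
  let ?M = "3*(nx+1)"
  note di = div_mod_less[OF i] and dj = div_mod_less[OF j]
  have "kron Ht (QGx nx Qx) $$ (j,i) = Ht $$ (j div ?M, i div ?M) * QGx nx Qx $$ (j mod ?M, i mod ?M)"
    using i j Ht by simp
  also have "\<dots> = Ht $$ (i div ?M, j div ?M) * (- QGx nx Qx $$ (i mod ?M, j mod ?M))"
  proof -
    have h1: "Ht $$ (j div ?M, i div ?M) = Ht $$ (i div ?M, j div ?M)" by (rule diag_sym[OF dHt Ht]) (use di dj in auto)
    have h2: "QGx nx Qx $$ (j mod ?M, i mod ?M) = - QGx nx Qx $$ (i mod ?M, j mod ?M)" by (rule QG_anti[OF Q QE]) (use di dj in auto)
    show ?thesis by (simp only: h1 h2)
  qed
  also have "\<dots> = - kron Ht (QGx nx Qx) $$ (i,j)" using i j Ht by simp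
  finally show ?thesis .
qed

lemma vavg_carrier[simp]: "vavg nv w N a \<in> carrier_vec N" "dim_vec (vavg nv w N a) = N"
  by (auto simp: vavg_def)

lemma vavg_bil:
  fixes M :: "real mat"
  assumes M: "M \<in> carrier_mat N N" and u: "u \<in> carrier_vec N" and a: "\<And>k. k < nv \<Longrightarrow> a k \<in> carrier_vec N"
  shows "u \<bullet> (M *\<^sub>v vavg nv w N a) = (\<Sum>k<nv. w k * (u \<bullet> (M *\<^sub>v a k)))"
proof -
  have "u \<bullet> (M *\<^sub>v vavg nv w N a) = (\<Sum>i<N. \<Sum>j<N. u$i * M$$(i,j) * vavg nv w N a $ j)"
    by (rule bil_expand[OF M u]) simp
  also have "\<dots> = (\<Sum>i<N. \<Sum>j<N. \<Sum>k<nv. w k * (u$i * M$$(i,j) * a k $ j))"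
    by (simp add: vavg_def sum_distrib_left mult_ac)
  also have "\<dots> = (\<Sum>i<N. \<Sum>k<nv. \<Sum>j<N. w k * (u$i * M$$(i,j) * a k $ j))"
    by (rule sum.cong[OF refl], rule sum.swap)
  also have "\<dots> = (\<Sum>k<nv. \<Sum>i<N. \<Sum>j<N. w k * (u$i * M$$(i,j) * a k $ j))"
    by (rule sum.swap)
  also have "\<dots> = (\<Sum>k<nv. w k * (u \<bullet> (M *\<^sub>v a k)))"
    by (rule sum.cong[OF refl]) (simp add: bil_expand[OF M u a] sum_distrib_left)
  finally show ?thesis .
qed

lemma vavg_left:
  fixes z :: "real vec"
  assumes z: "z \<in> carrier_vec N" and a: "\<And>k. k < nv \<Longrightarrow> a k \<in> carrier_vec N"
  shows "vavg nv w N a \<bullet> z = (\<Sum>k<nv. w k * (a k \<bullet> z))"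
proof -
  have "vavg nv w N a \<bullet> z = (\<Sum>j<N. (\<Sum>k<nv. w k * a k $ j) * z $ j)"
    using z by (simp add: scalar_prod_def vavg_def lessThan_atLeast0)
  also have "\<dots> = (\<Sum>j<N. \<Sum>k<nv. w k * (a k $ j * z $ j))"
    unfolding sum_distrib_right by (simp add: mult_ac)
  also have "\<dots> = (\<Sum>k<nv. \<Sum>j<N. w k * (a k $ j * z $ j))" by (rule sum.swap)
  also have "\<dots> = (\<Sum>k<nv. w k * (a k \<bullet> z))"
    by (rule sum.cong[OF refl]) (use a z in \<open>simp add: scalar_prod_def lessThan_atLeast0 sum_distrib_left\<close>)
  finally show ?thesis .
qed

lemma psd_nonneg:
  fixes M :: "real mat"
  assumes M: "M \<in> carrier_mat n n" and d: "diagonal_mat M" and nn: "\<And>i. i < n \<Longrightarrow> 0 \<le> M $$ (i,i)"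
    and u: "u \<in> carrier_vec n"
  shows "0 \<le> u \<bullet> (M *\<^sub>v u)"
  unfolding diag_form[OF M d u u] by (intro sum_nonneg) (simp add: nn)

lemma psd_ineq:
  fixes M :: "real mat"
  assumes M: "M \<in> carrier_mat n n" and d: "diagonal_mat M" and nn: "\<And>i. i < n \<Longrightarrow> 0 \<le> M $$ (i,i)"
    and u: "u \<in> carrier_vec n" and z: "z \<in> carrier_vec n"
  shows "- (1/2) * (u \<bullet> (M *\<^sub>v u)) + u \<bullet> (M *\<^sub>v z) \<le> (1/2) * (z \<bullet> (M *\<^sub>v z))"
proof -
  have "(\<Sum>i<n. -(1/2) * (M $$ (i,i) * (u$i * u$i)) + M $$ (i,i) * (u$i * z$i)) \<le> (\<Sum>i<n. (1/2) * (M $$ (i,i) * (z$i * z$i)))"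
  proof (rule sum_mono)
    fix i assume "i \<in> {..<n}"
    then have "0 \<le> M $$ (i,i) * ((u$i - z$i) * (u$i - z$i))" using nn by simp
    moreover have "-(1/2) * (M $$ (i,i) * (u$i * u$i)) + M $$ (i,i) * (u$i * z$i)
       = (1/2) * (M $$ (i,i) * (z$i * z$i)) - (1/2) * (M $$ (i,i) * ((u$i - z$i) * (u$i - z$i)))"
      by (simp add: algebra_simps)
    ultimately show "-(1/2) * (M $$ (i,i) * (u$i * u$i)) + M $$ (i,i) * (u$i * z$i) \<le> (1/2) * (M $$ (i,i) * (z$i * z$i))"
      by linarith
  qed
  then have "-(1/2) * (\<Sum>i<n. M $$ (i,i) * (u$i * u$i)) + (\<Sum>i<n. M $$ (i,i) * (u$i * z$i)) \<le> (1/2) * (\<Sum>i<n. M $$ (i,i) * (z$i * z$i))"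
    by (simp only: sum.distrib sum_distrib_left[symmetric])
  then show ?thesis
    unfolding diag_form[OF M d u u] diag_form[OF M d u z] diag_form[OF M d z z] .
qed

lemma pd_zero:
  fixes M :: "real mat"
  assumes M: "M \<in> carrier_mat n n" and d: "diagonal_mat M" and pos: "\<And>i. i < n \<Longrightarrow> 0 < M $$ (i,i)"
    and u: "u \<in> carrier_vec n" and z: "u \<bullet> (M *\<^sub>v u) \<le> 0"
  shows "u = 0\<^sub>v n"
proof (rule eq_vecI)
  have s: "(\<Sum>i<n. M $$ (i,i) * (u$i * u$i)) \<le> 0" using z unfolding diag_form[OF M d u u] .
  have nn: "\<And>i. i \<in> {..<n} \<Longrightarrow> 0 \<le> M $$ (i,i) * (u$i * u$i)" using pos by (simp add: less_imp_le)
  have s0: "(\<Sum>i<n. M $$ (i,i) * (u$i * u$i)) = 0" 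
  proof -
    have "0 \<le> (\<Sum>i<n. M $$ (i,i) * (u$i * u$i))" by (rule sum_nonneg) (rule nn)
    then show ?thesis using s by linarith
  qed
  have all: "\<forall>i\<in>{..<n}. M $$ (i,i) * (u$i * u$i) = 0"
    using sum_nonneg_eq_0_iff[of "{..<n}" "\<lambda>i. M $$ (i,i) * (u$i * u$i)"] nn s0 by simp
  fix i assume "i < dim_vec (0\<^sub>v n)"
  then have i: "i < n" by simp
  then have "M $$ (i,i) * (u$i * u$i) = 0" using all by simp
  then have "u$i * u$i = 0" using pos[OF i] by simp
  then show "u $ i = 0\<^sub>v n $ i" using i by simp
qed (use u in auto)

lemma alg_step:
  fixes \<epsilon> t b bb q0 Y v X h s a :: real
  assumes e: "0 < \<epsilon>" and E: "t/2 - b/2 - Y/\<epsilon> - v/\<epsilon>\<^sup>2 * X = -(s/\<epsilon>\<^sup>2 + a) * h - b + bb"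
    and I: "-(1/2)*b + bb \<le> q0/2" and h: "0 \<le> h" and s: "0 < s" and a: "0 \<le> a"
  shows "\<epsilon>\<^sup>2/2 * t \<le> \<epsilon>\<^sup>2/2 * q0 + \<epsilon> * Y + v * X"
proof -
  have m0: "\<epsilon>\<^sup>2 * (t/2 - b/2 - Y/\<epsilon> - v/\<epsilon>\<^sup>2 * X) = \<epsilon>\<^sup>2 * (-(s/\<epsilon>\<^sup>2 + a) * h - b + bb)" using E by simp
  have m1: "\<epsilon>\<^sup>2 * (t/2 - b/2 - Y/\<epsilon> - v/\<epsilon>\<^sup>2 * X) = \<epsilon>\<^sup>2/2 * t - \<epsilon>\<^sup>2/2 * b - \<epsilon> * Y - v * X"
    using e by (simp add: field_simps power2_eq_square)
  have m2: "\<epsilon>\<^sup>2 * (-(s/\<epsilon>\<^sup>2 + a) * h - b + bb) = -(s + \<epsilon>\<^sup>2 * a) * h + \<epsilon>\<^sup>2 * (- b + bb)"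
    using e by (simp add: field_simps power2_eq_square)
  have E2: "\<epsilon>\<^sup>2/2 * t - \<epsilon>\<^sup>2/2 * b - \<epsilon> * Y - v * X = -(s + \<epsilon>\<^sup>2 * a) * h + \<epsilon>\<^sup>2 * (- b + bb)"
    using m0 unfolding m1 m2 .
  have "\<epsilon>\<^sup>2 * (-(1/2)*b + bb) \<le> \<epsilon>\<^sup>2 * (q0/2)" by (rule mult_left_mono[OF I]) simp
  moreover have "0 \<le> (s + \<epsilon>\<^sup>2 * a) * h" using s a h by simp
  ultimately show ?thesis using E2 by (simp add: algebra_simps)
qed

theorem theorem3p8:
  fixes nx nt nv px pt :: nat
    and xn tn :: "nat \<Rightarrow> real"
    and Hx Qx Ht Qt :: "real mat"
    and v w :: "nat \<Rightarrow> real"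
    and \<epsilon> \<sigma>s \<sigma>a :: real
    and \<rho> \<rho>0 :: "real vec"
    and g g0 :: "nat \<Rightarrow> real vec"
  defines "N \<equiv> (nt+1) * (3 * (nx+1))"
    and "Dx \<equiv> Dx_st nx nt Hx Qx"
    and "Dt \<equiv> Dt_st nx nt Ht Qt"
    and "SAT \<equiv> minv (Ht_st nx Ht) * tB_st nx nt * transpose_mat (tB_st nx nt)"
  assumes sbp_x: "sbp nx xn px Hx Qx"
    and sbp_t: "sbp nt tn pt Ht Qt"
    and nv: "1 \<le> nv"
    and w_pos: "\<forall>k<nv. 0 < w k"
    and w_sum: "(\<Sum>k<nv. w k) = 1"
    and w_mom: "(\<Sum>k<nv. w k * v k) = 0"
    and eps: "0 < \<epsilon>" and sig_s: "0 < \<sigma>s" and sig_a: "0 \<le> \<sigma>a"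
    and dim_rho: "\<rho> \<in> carrier_vec N" and dim_rho0: "\<rho>0 \<in> carrier_vec N"
    and dim_g: "\<forall>k<nv. g k \<in> carrier_vec N" and dim_g0: "\<forall>k<nv. g0 k \<in> carrier_vec N"
    and g0_avg: "vavg nv w N g0 = 0\<^sub>v N"
    and eq_rho: "Dt *\<^sub>v \<rho> + Dx *\<^sub>v vavg nv w N (\<lambda>k. v k \<cdot>\<^sub>v g k)
                 = (- \<sigma>a) \<cdot>\<^sub>v \<rho> - SAT *\<^sub>v (\<rho> - \<rho>0)"
    and eq_g: "\<forall>k<nv.
        Dt *\<^sub>v g k + (v k / \<epsilon>) \<cdot>\<^sub>v (Dx *\<^sub>v g k)
          - (1 / \<epsilon>) \<cdot>\<^sub>v vavg nv w N (\<lambda>j. v j \<cdot>\<^sub>v (Dx *\<^sub>v g j))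
          + (v k / \<epsilon>\<^sup>2) \<cdot>\<^sub>v (Dx *\<^sub>v \<rho>)
        = (- (\<sigma>s / \<epsilon>\<^sup>2 + \<sigma>a)) \<cdot>\<^sub>v g k - SAT *\<^sub>v (g k - g0 k)"
  shows "(1/2) * (\<rho> \<bullet> (MT nx nt Hx *\<^sub>v \<rho>))
           + (\<epsilon>\<^sup>2 / 2) * (\<Sum>k<nv. w k * (g k \<bullet> (MT nx nt Hx *\<^sub>v g k)))
         \<le> (1/2) * (\<rho>0 \<bullet> (MB nx nt Hx *\<^sub>v \<rho>0))
           + (\<epsilon>\<^sup>2 / 2) * (\<Sum>k<nv. w k * (g0 k \<bullet> (MB nx nt Hx *\<^sub>v g0 k)))"
proof -
  note sx = sbp_facts[OF sbp_x] and st = sbp_facts[OF sbp_t]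
  have Hx: "Hx \<in> carrier_mat (nx+1) (nx+1)" and Qx: "Qx \<in> carrier_mat (nx+1) (nx+1)"
    and dHx: "diagonal_mat Hx" and QEx: "Qx + transpose_mat Qx = sbpE nx" using sx by auto
  have posHx: "\<And>i. i < nx+1 \<Longrightarrow> 0 < Hx $$ (i,i)" using sx(4) by blast
  have Ht: "Ht \<in> carrier_mat (nt+1) (nt+1)" and Qt: "Qt \<in> carrier_mat (nt+1) (nt+1)"
    and dHt: "diagonal_mat Ht" and QEt: "Qt + transpose_mat Qt = sbpE nt" using st by auto
  have posHt: "\<And>i. i < nt+1 \<Longrightarrow> 0 < Ht $$ (i,i)" using st(4) by blast
  have iHx: "minv Hx \<in> carrier_mat (nx+1) (nx+1)" "Hx * minv Hx = 1\<^sub>m (nx+1)" "minv Hx * Hx = 1\<^sub>m (nx+1)"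
    using diag_inv[OF Hx dHx] posHx by (metis less_irrefl)+
  have iHt: "minv Ht \<in> carrier_mat (nt+1) (nt+1)" "Ht * minv Ht = 1\<^sub>m (nt+1)" "minv Ht * Ht = 1\<^sub>m (nt+1)"
    using diag_inv[OF Ht dHt] posHt by (metis less_irrefl)+
  define P where "P = kron (1\<^sub>m 3) Hx"
  define Hs where "Hs = kron Ht P"
  define A where "A = kron Ht (QGx nx Qx)"
  define TT where "TT = kron Qt P"
  let ?M = "3*(nx+1)"
  have Pc: "P \<in> carrier_mat ?M ?M" "diagonal_mat P" "\<And>i. i < ?M \<Longrightarrow> 0 < P $$ (i,i)"
    using Pfacts[OF Hx dHx posHx] unfolding P_def by auto
  have Hsc: "Hs \<in> carrier_mat N N" "diagonal_mat Hs"
    using kdiag[OF Ht dHt Pc(1) Pc(2)] unfolding Hs_def N_def by auto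
  have Hspos: "\<And>i. i < N \<Longrightarrow> 0 < Hs $$ (i,i)"
  proof -
    fix i assume i: "i < N"
    then have i': "i < (nt+1) * ?M" by (simp add: N_def)
    note dm = div_mod_less[OF i']
    have "Hs $$ (i,i) = Ht $$ (i div ?M, i div ?M) * P $$ (i mod ?M, i mod ?M)"
      unfolding Hs_def using kdiag(3)[OF Ht dHt Pc(1) Pc(2) i'] .
    then show "0 < Hs $$ (i,i)" using posHt Pc(3) dm by simp
  qed
  have mm: "Hs * Dt = TT" "Hs * Dx = A" "Hs * SAT = MB nx nt Hx"
     "Dt \<in> carrier_mat N N" "Dx \<in> carrier_mat N N" "SAT \<in> carrier_mat N N"
    using mats[OF Hx Ht Qt iHx(1) iHx(2) iHt(1) iHt(2) iHt(3)]
    unfolding Hs_def P_def TT_def A_def Dt_def Dx_def SAT_def N_def by auto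
  have Dtc: "Dt \<in> carrier_mat N N" and Dxc: "Dx \<in> carrier_mat N N" and SATc: "SAT \<in> carrier_mat N N"
    using mm by auto
  have MBe: "MB nx nt Hx = kron (outer (tL nt) (tL nt)) P" by (simp add: MB_def P_def)
  have MTe: "MT nx nt Hx = kron (outer (tR nt) (tR nt)) P" by (simp add: MT_def P_def)
  have oL: "outer (tL nt) (tL nt) \<in> carrier_mat (nt+1) (nt+1)" "diagonal_mat (outer (tL nt) (tL nt))"
    by (auto simp: tL_def outer_diag)
  have oR: "outer (tR nt) (tR nt) \<in> carrier_mat (nt+1) (nt+1)" "diagonal_mat (outer (tR nt) (tR nt))"
    by (auto simp: tR_def outer_diag)
  have MBc: "MB nx nt Hx \<in> carrier_mat N N" "diagonal_mat (MB nx nt Hx)"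
    using kdiag[OF oL(1) oL(2) Pc(1) Pc(2)] unfolding MBe N_def by auto
  have MTc: "MT nx nt Hx \<in> carrier_mat N N" "diagonal_mat (MT nx nt Hx)"
    using kdiag[OF oR(1) oR(2) Pc(1) Pc(2)] unfolding MTe N_def by auto
  have MBnn: "\<And>i. i < N \<Longrightarrow> 0 \<le> MB nx nt Hx $$ (i,i)"
  proof -
    fix i assume i: "i < N"
    then have i': "i < (nt+1) * ?M" by (simp add: N_def)
    note dm = div_mod_less[OF i']
    have "MB nx nt Hx $$ (i,i) = outer (tL nt) (tL nt) $$ (i div ?M, i div ?M) * P $$ (i mod ?M, i mod ?M)"
      unfolding MBe using kdiag(3)[OF oL(1) oL(2) Pc(1) Pc(2) i'] .
    then show "0 \<le> MB nx nt Hx $$ (i,i)" using Pc(3) dm by (simp add: tL_def less_imp_le)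
  qed
  have MTnn: "\<And>i. i < N \<Longrightarrow> 0 \<le> MT nx nt Hx $$ (i,i)"
  proof -
    fix i assume i: "i < N"
    then have i': "i < (nt+1) * ?M" by (simp add: N_def)
    note dm = div_mod_less[OF i']
    have "MT nx nt Hx $$ (i,i) = outer (tR nt) (tR nt) $$ (i div ?M, i div ?M) * P $$ (i mod ?M, i mod ?M)"
      unfolding MTe using kdiag(3)[OF oR(1) oR(2) Pc(1) Pc(2) i'] .
    then show "0 \<le> MT nx nt Hx $$ (i,i)" using Pc(3) dm by (simp add: tR_def less_imp_le)
  qed
  have Ac: "A \<in> carrier_mat N N" unfolding A_def N_def using kron_carrier[of Ht "QGx nx Qx"] Ht by auto
  have TTc: "TT \<in> carrier_mat N N" unfolding TT_def N_def using kron_carrier[of Qt P] Qt Pc(1) by auto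
  have Aanti: "\<And>u z. u \<in> carrier_vec N \<Longrightarrow> z \<in> carrier_vec N \<Longrightarrow> u \<bullet> (A *\<^sub>v z) = - (z \<bullet> (A *\<^sub>v u))"
    by (rule antisym_form[OF Ac]) (auto simp: A_def N_def intro!: A_anti[OF Ht dHt Qx QEx])
  have Tf: "\<And>u. u \<in> carrier_vec N \<Longrightarrow> u \<bullet> (TT *\<^sub>v u) = (1/2) * (u \<bullet> (MT nx nt Hx *\<^sub>v u)) - (1/2) * (u \<bullet> (MB nx nt Hx *\<^sub>v u))"
    unfolding TT_def MTe MBe by (rule T_form[OF Qt QEt Pc(1) Pc(2)]) (simp add: N_def)
  have cv: "\<And>z. z \<in> carrier_vec N \<Longrightarrow> Dx *\<^sub>v z \<in> carrier_vec N"
     "\<And>z. z \<in> carrier_vec N \<Longrightarrow> Dt *\<^sub>v z \<in> carrier_vec N"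
     "\<And>z. z \<in> carrier_vec N \<Longrightarrow> SAT *\<^sub>v z \<in> carrier_vec N"
    using mult_mat_vec_carrier[OF Dxc] mult_mat_vec_carrier[OF Dtc] mult_mat_vec_carrier[OF SATc] by auto
  have gk: "\<And>k. k < nv \<Longrightarrow> g k \<in> carrier_vec N" and g0k: "\<And>k. k < nv \<Longrightarrow> g0 k \<in> carrier_vec N"
    using dim_g dim_g0 by auto
  have Ladd: "\<And>u x y. u \<in> carrier_vec N \<Longrightarrow> x \<in> carrier_vec N \<Longrightarrow> y \<in> carrier_vec N \<Longrightarrow>
      u \<bullet> (Hs *\<^sub>v (x + y)) = u \<bullet> (Hs *\<^sub>v x) + u \<bullet> (Hs *\<^sub>v y)"
    using Hsc(1) by (simp add: mult_add_distrib_mat_vec[OF Hsc(1)] scalar_prod_add_distrib[of _ N])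
  have Lmin: "\<And>u x y. u \<in> carrier_vec N \<Longrightarrow> x \<in> carrier_vec N \<Longrightarrow> y \<in> carrier_vec N \<Longrightarrow>
      u \<bullet> (Hs *\<^sub>v (x - y)) = u \<bullet> (Hs *\<^sub>v x) - u \<bullet> (Hs *\<^sub>v y)"
    using Hsc(1) by (simp add: mult_minus_distrib_mat_vec[OF Hsc(1)] scalar_prod_minus_distrib[of _ N])
  have Lsm: "\<And>u x c. u \<in> carrier_vec N \<Longrightarrow> x \<in> carrier_vec N \<Longrightarrow>
      u \<bullet> (Hs *\<^sub>v (c \<cdot>\<^sub>v x)) = c * (u \<bullet> (Hs *\<^sub>v x))"
    using Hsc(1) by (simp add: mult_mat_vec[OF Hsc(1)])
  have Asm: "\<And>u x c. u \<in> carrier_vec N \<Longrightarrow> x \<in> carrier_vec N \<Longrightarrow>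
      u \<bullet> (A *\<^sub>v (c \<cdot>\<^sub>v x)) = c * (u \<bullet> (A *\<^sub>v x))"
    using Ac by (simp add: mult_mat_vec[OF Ac])
  have LDt: "\<And>(u::real vec) z. z \<in> carrier_vec N \<Longrightarrow> u \<bullet> (Hs *\<^sub>v (Dt *\<^sub>v z)) = u \<bullet> (TT *\<^sub>v z)"
    using assoc_mult_mat_vec[OF Hsc(1) Dtc] mm(1) by metis
  have LDx: "\<And>(u::real vec) z. z \<in> carrier_vec N \<Longrightarrow> u \<bullet> (Hs *\<^sub>v (Dx *\<^sub>v z)) = u \<bullet> (A *\<^sub>v z)"
    using assoc_mult_mat_vec[OF Hsc(1) Dxc] mm(2) by metis
  have LS: "\<And>(u::real vec) z. z \<in> carrier_vec N \<Longrightarrow> u \<bullet> (Hs *\<^sub>v (SAT *\<^sub>v z)) = u \<bullet> (MB nx nt Hx *\<^sub>v z)"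
    using assoc_mult_mat_vec[OF Hsc(1) SATc] mm(3) by metis
  define V where "V = vavg nv w N (\<lambda>k. v k \<cdot>\<^sub>v g k)"
  define W where "W = vavg nv w N (\<lambda>j. v j \<cdot>\<^sub>v (Dx *\<^sub>v g j))"
  have Vc: "V \<in> carrier_vec N" and Wc: "W \<in> carrier_vec N" unfolding V_def W_def by auto
  have AV: "\<And>u. u \<in> carrier_vec N \<Longrightarrow> u \<bullet> (A *\<^sub>v V) = (\<Sum>k<nv. w k * (v k * (u \<bullet> (A *\<^sub>v g k))))"
  proof -
    fix u :: "real vec" assume u: "u \<in> carrier_vec N"
    have "u \<bullet> (A *\<^sub>v V) = (\<Sum>k<nv. w k * (u \<bullet> (A *\<^sub>v (v k \<cdot>\<^sub>v g k))))"
      unfolding V_def by (rule vavg_bil[OF Ac u]) (simp add: gk)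
    also have "\<dots> = (\<Sum>k<nv. w k * (v k * (u \<bullet> (A *\<^sub>v g k))))"
      by (rule sum.cong[OF refl]) (simp add: Asm[OF u] gk)
    finally show "u \<bullet> (A *\<^sub>v V) = (\<Sum>k<nv. w k * (v k * (u \<bullet> (A *\<^sub>v g k))))" .
  qed
  have HW: "\<And>u. u \<in> carrier_vec N \<Longrightarrow> u \<bullet> (Hs *\<^sub>v W) = (\<Sum>k<nv. w k * (v k * (u \<bullet> (A *\<^sub>v g k))))"
  proof -
    fix u :: "real vec" assume u: "u \<in> carrier_vec N"
    have "u \<bullet> (Hs *\<^sub>v W) = (\<Sum>k<nv. w k * (u \<bullet> (Hs *\<^sub>v (v k \<cdot>\<^sub>v (Dx *\<^sub>v g k)))))"
      unfolding W_def by (rule vavg_bil[OF Hsc(1) u]) (simp add: gk cv)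
    also have "\<dots> = (\<Sum>k<nv. w k * (v k * (u \<bullet> (A *\<^sub>v g k))))"
      by (rule sum.cong[OF refl]) (simp add: Lsm[OF u] LDx gk cv)
    finally show "u \<bullet> (Hs *\<^sub>v W) = (\<Sum>k<nv. w k * (v k * (u \<bullet> (A *\<^sub>v g k))))" .
  qed
  have ER: "\<And>u. u \<in> carrier_vec N \<Longrightarrow> u \<bullet> (TT *\<^sub>v \<rho>) + (\<Sum>k<nv. w k * (v k * (u \<bullet> (A *\<^sub>v g k))))
      = - \<sigma>a * (u \<bullet> (Hs *\<^sub>v \<rho>)) - (u \<bullet> (MB nx nt Hx *\<^sub>v \<rho>) - u \<bullet> (MB nx nt Hx *\<^sub>v \<rho>0))"
  proof -
    fix u :: "real vec" assume u: "u \<in> carrier_vec N"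
    have e: "u \<bullet> (Hs *\<^sub>v (Dt *\<^sub>v \<rho> + Dx *\<^sub>v V)) = u \<bullet> (Hs *\<^sub>v ((- \<sigma>a) \<cdot>\<^sub>v \<rho> - SAT *\<^sub>v (\<rho> - \<rho>0)))"
      using eq_rho unfolding V_def by simp
    have l: "u \<bullet> (Hs *\<^sub>v (Dt *\<^sub>v \<rho> + Dx *\<^sub>v V)) = u \<bullet> (TT *\<^sub>v \<rho>) + u \<bullet> (A *\<^sub>v V)"
      using Dtc Dxc dim_rho Vc by (simp add: Ladd[OF u] LDt LDx cv)
    have r: "u \<bullet> (Hs *\<^sub>v ((- \<sigma>a) \<cdot>\<^sub>v \<rho> - SAT *\<^sub>v (\<rho> - \<rho>0))) = - \<sigma>a * (u \<bullet> (Hs *\<^sub>v \<rho>)) - (u \<bullet> (MB nx nt Hx *\<^sub>v \<rho>) - u \<bullet> (MB nx nt Hx *\<^sub>v \<rho>0))"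
      using SATc dim_rho dim_rho0 MBc(1)
      by (simp add: cv Lmin[OF u] Lsm[OF u] LS mult_minus_distrib_mat_vec[OF MBc(1)] scalar_prod_minus_distrib[OF u])
    show "u \<bullet> (TT *\<^sub>v \<rho>) + (\<Sum>k<nv. w k * (v k * (u \<bullet> (A *\<^sub>v g k))))
      = - \<sigma>a * (u \<bullet> (Hs *\<^sub>v \<rho>)) - (u \<bullet> (MB nx nt Hx *\<^sub>v \<rho>) - u \<bullet> (MB nx nt Hx *\<^sub>v \<rho>0))"
      using e l r AV[OF u] by simp
  qed
  have EG: "\<And>u k. u \<in> carrier_vec N \<Longrightarrow> k < nv \<Longrightarrow>
      u \<bullet> (TT *\<^sub>v g k) + v k / \<epsilon> * (u \<bullet> (A *\<^sub>v g k)) - 1 / \<epsilon> * (\<Sum>j<nv. w j * (v j * (u \<bullet> (A *\<^sub>v g j))))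
        + v k / \<epsilon>\<^sup>2 * (u \<bullet> (A *\<^sub>v \<rho>))
      = - (\<sigma>s / \<epsilon>\<^sup>2 + \<sigma>a) * (u \<bullet> (Hs *\<^sub>v g k)) - (u \<bullet> (MB nx nt Hx *\<^sub>v g k) - u \<bullet> (MB nx nt Hx *\<^sub>v g0 k))"
  proof -
    fix u :: "real vec" and k assume u: "u \<in> carrier_vec N" and k: "k < nv"
    have gc: "g k \<in> carrier_vec N" "g0 k \<in> carrier_vec N" using gk g0k k by auto
    have e: "u \<bullet> (Hs *\<^sub>v (Dt *\<^sub>v g k + (v k / \<epsilon>) \<cdot>\<^sub>v (Dx *\<^sub>v g k) - (1 / \<epsilon>) \<cdot>\<^sub>v W + (v k / \<epsilon>\<^sup>2) \<cdot>\<^sub>v (Dx *\<^sub>v \<rho>)))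
       = u \<bullet> (Hs *\<^sub>v ((- (\<sigma>s / \<epsilon>\<^sup>2 + \<sigma>a)) \<cdot>\<^sub>v g k - SAT *\<^sub>v (g k - g0 k)))"
      using eq_g k unfolding W_def by simp
    have l: "u \<bullet> (Hs *\<^sub>v (Dt *\<^sub>v g k + (v k / \<epsilon>) \<cdot>\<^sub>v (Dx *\<^sub>v g k) - (1 / \<epsilon>) \<cdot>\<^sub>v W + (v k / \<epsilon>\<^sup>2) \<cdot>\<^sub>v (Dx *\<^sub>v \<rho>)))
       = u \<bullet> (TT *\<^sub>v g k) + v k / \<epsilon> * (u \<bullet> (A *\<^sub>v g k)) - 1 / \<epsilon> * (u \<bullet> (Hs *\<^sub>v W)) + v k / \<epsilon>\<^sup>2 * (u \<bullet> (A *\<^sub>v \<rho>))"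
      using Dtc Dxc dim_rho Wc gc by (simp add: Ladd[OF u] Lmin[OF u] Lsm[OF u] LDt LDx cv)
    have r: "u \<bullet> (Hs *\<^sub>v ((- (\<sigma>s / \<epsilon>\<^sup>2 + \<sigma>a)) \<cdot>\<^sub>v g k - SAT *\<^sub>v (g k - g0 k)))
       = - (\<sigma>s / \<epsilon>\<^sup>2 + \<sigma>a) * (u \<bullet> (Hs *\<^sub>v g k)) - (u \<bullet> (MB nx nt Hx *\<^sub>v g k) - u \<bullet> (MB nx nt Hx *\<^sub>v g0 k))"
      using SATc gc MBc(1)
      by (simp add: cv Lmin[OF u] Lsm[OF u] LS mult_minus_distrib_mat_vec[OF MBc(1)] scalar_prod_minus_distrib[OF u])
    show "u \<bullet> (TT *\<^sub>v g k) + v k / \<epsilon> * (u \<bullet> (A *\<^sub>v g k)) - 1 / \<epsilon> * (\<Sum>j<nv. w j * (v j * (u \<bullet> (A *\<^sub>v g j))))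
        + v k / \<epsilon>\<^sup>2 * (u \<bullet> (A *\<^sub>v \<rho>))
      = - (\<sigma>s / \<epsilon>\<^sup>2 + \<sigma>a) * (u \<bullet> (Hs *\<^sub>v g k)) - (u \<bullet> (MB nx nt Hx *\<^sub>v g k) - u \<bullet> (MB nx nt Hx *\<^sub>v g0 k))"
      using e l r HW[OF u] by simp
  qed
  define G where "G = vavg nv w N g"
  have Gc: "G \<in> carrier_vec N" unfolding G_def by simp
  define c where "c = \<sigma>s / \<epsilon>\<^sup>2 + \<sigma>a"
  have cpos: "0 < c" unfolding c_def using sig_s sig_a eps by (simp add: add_pos_nonneg)
  have MBv: "\<And>z. z \<in> carrier_vec N \<Longrightarrow> MB nx nt Hx *\<^sub>v z \<in> carrier_vec N" using MBc(1) by auto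
  have G0: "G = 0\<^sub>v N"
  proof -
    define S where "S = (\<Sum>j<nv. w j * (v j * (G \<bullet> (A *\<^sub>v g j))))"
    define R0 where "R0 = G \<bullet> (A *\<^sub>v \<rho>)"
    have EGk: "\<And>k. k < nv \<Longrightarrow> G \<bullet> (TT *\<^sub>v g k) + v k / \<epsilon> * (G \<bullet> (A *\<^sub>v g k)) - 1 / \<epsilon> * S + v k / \<epsilon>\<^sup>2 * R0
        = - c * (G \<bullet> (Hs *\<^sub>v g k)) - (G \<bullet> (MB nx nt Hx *\<^sub>v g k) - G \<bullet> (MB nx nt Hx *\<^sub>v g0 k))"
      unfolding S_def R0_def c_def by (rule EG[OF Gc])
    have sumeq: "(\<Sum>k<nv. w k * (G \<bullet> (TT *\<^sub>v g k) + v k / \<epsilon> * (G \<bullet> (A *\<^sub>v g k)) - 1 / \<epsilon> * S + v k / \<epsilon>\<^sup>2 * R0))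
        = (\<Sum>k<nv. w k * (- c * (G \<bullet> (Hs *\<^sub>v g k)) - (G \<bullet> (MB nx nt Hx *\<^sub>v g k) - G \<bullet> (MB nx nt Hx *\<^sub>v g0 k))))"
      by (rule sum.cong[OF refl]) (simp only: EGk lessThan_iff)
    have l: "(\<Sum>k<nv. w k * (G \<bullet> (TT *\<^sub>v g k) + v k / \<epsilon> * (G \<bullet> (A *\<^sub>v g k)) - 1 / \<epsilon> * S + v k / \<epsilon>\<^sup>2 * R0))
      = (\<Sum>k<nv. w k * (G \<bullet> (TT *\<^sub>v g k))) + 1 / \<epsilon> * (\<Sum>k<nv. w k * (v k * (G \<bullet> (A *\<^sub>v g k))))
        - 1 / \<epsilon> * S * (\<Sum>k<nv. w k) + R0 / \<epsilon>\<^sup>2 * (\<Sum>k<nv. w k * v k)"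
      by (simp add: sum.distrib sum_subtractf sum_distrib_left sum_distrib_right algebra_simps)
    have r: "(\<Sum>k<nv. w k * (- c * (G \<bullet> (Hs *\<^sub>v g k)) - (G \<bullet> (MB nx nt Hx *\<^sub>v g k) - G \<bullet> (MB nx nt Hx *\<^sub>v g0 k))))
      = - c * (\<Sum>k<nv. w k * (G \<bullet> (Hs *\<^sub>v g k))) - (\<Sum>k<nv. w k * (G \<bullet> (MB nx nt Hx *\<^sub>v g k)))
        + (\<Sum>k<nv. w k * (G \<bullet> (MB nx nt Hx *\<^sub>v g0 k)))"
      by (simp add: sum.distrib sum_subtractf sum_distrib_left sum_distrib_right sum_negf algebra_simps)
    have a1: "(\<Sum>k<nv. w k * (G \<bullet> (TT *\<^sub>v g k))) = G \<bullet> (TT *\<^sub>v G)"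
      unfolding G_def[symmetric] using vavg_bil[OF TTc Gc gk, where w=w] by (simp add: G_def)
    have a2: "(\<Sum>k<nv. w k * (G \<bullet> (Hs *\<^sub>v g k))) = G \<bullet> (Hs *\<^sub>v G)"
      using vavg_bil[OF Hsc(1) Gc gk, where w=w] by (simp add: G_def)
    have a3: "(\<Sum>k<nv. w k * (G \<bullet> (MB nx nt Hx *\<^sub>v g k))) = G \<bullet> (MB nx nt Hx *\<^sub>v G)"
      using vavg_bil[OF MBc(1) Gc gk, where w=w] by (simp add: G_def)
    have a4: "(\<Sum>k<nv. w k * (G \<bullet> (MB nx nt Hx *\<^sub>v g0 k))) = 0"
    proof -
      have z0: "MB nx nt Hx *\<^sub>v 0\<^sub>v N = 0\<^sub>v N" by (rule eq_vecI) (use MBc(1) in \<open>auto simp: scalar_prod_def\<close>)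
      have "G \<bullet> (MB nx nt Hx *\<^sub>v 0\<^sub>v N) = 0" unfolding z0 using Gc by simp
      then show ?thesis using vavg_bil[where nv=nv and a=g0 and w=w, OF MBc(1) Gc g0k] g0_avg by simp
    qed
    have a5: "(\<Sum>k<nv. w k * (v k * (G \<bullet> (A *\<^sub>v g k)))) = S" by (simp add: S_def)
    have key: "G \<bullet> (TT *\<^sub>v G) = - c * (G \<bullet> (Hs *\<^sub>v G)) - G \<bullet> (MB nx nt Hx *\<^sub>v G)"
      using sumeq unfolding l r a1 a2 a3 a4 a5 w_sum w_mom by simp
    have qT: "0 \<le> G \<bullet> (MT nx nt Hx *\<^sub>v G)" by (rule psd_nonneg[OF MTc(1) MTc(2) MTnn Gc])
    have qB: "0 \<le> G \<bullet> (MB nx nt Hx *\<^sub>v G)" by (rule psd_nonneg[OF MBc(1) MBc(2) MBnn Gc])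
    have "c * (G \<bullet> (Hs *\<^sub>v G)) \<le> 0" using key Tf[OF Gc] qT qB by linarith
    then have "G \<bullet> (Hs *\<^sub>v G) \<le> 0" using cpos by (simp add: mult_le_0_iff)
    then show ?thesis using pd_zero[OF Hsc(1) Hsc(2) Hspos Gc] by blast
  qed
  define Y where "Y = (\<lambda>k. \<Sum>j<nv. w j * (v j * (g k \<bullet> (A *\<^sub>v g j))))"
  define X where "X = (\<lambda>k. \<rho> \<bullet> (A *\<^sub>v g k))"
  have ineq: "\<And>k. k < nv \<Longrightarrow> \<epsilon>\<^sup>2/2 * (g k \<bullet> (MT nx nt Hx *\<^sub>v g k))
      \<le> \<epsilon>\<^sup>2/2 * (g0 k \<bullet> (MB nx nt Hx *\<^sub>v g0 k)) + \<epsilon> * Y k + v k * X k"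
  proof -
    fix k assume k: "k < nv"
    have gc: "g k \<in> carrier_vec N" "g0 k \<in> carrier_vec N" using gk g0k k by auto
    have z: "g k \<bullet> (A *\<^sub>v g k) = 0" using Aanti[OF gc(1) gc(1)] by simp
    have xr: "g k \<bullet> (A *\<^sub>v \<rho>) = - X k" unfolding X_def by (rule Aanti[OF gc(1) dim_rho])
    have E: "(g k \<bullet> (MT nx nt Hx *\<^sub>v g k))/2 - (g k \<bullet> (MB nx nt Hx *\<^sub>v g k))/2 - Y k/\<epsilon> - v k/\<epsilon>\<^sup>2 * X k
        = -(\<sigma>s/\<epsilon>\<^sup>2 + \<sigma>a) * (g k \<bullet> (Hs *\<^sub>v g k)) - (g k \<bullet> (MB nx nt Hx *\<^sub>v g k)) + g k \<bullet> (MB nx nt Hx *\<^sub>v g0 k)"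
      using EG[OF gc(1) k] Tf[OF gc(1)] z xr unfolding Y_def by (simp add: algebra_simps)
    have I: "-(1/2) * (g k \<bullet> (MB nx nt Hx *\<^sub>v g k)) + g k \<bullet> (MB nx nt Hx *\<^sub>v g0 k) \<le> (g0 k \<bullet> (MB nx nt Hx *\<^sub>v g0 k))/2"
      using psd_ineq[OF MBc(1) MBc(2) MBnn gc(1) gc(2)] by simp
    have h: "0 \<le> g k \<bullet> (Hs *\<^sub>v g k)" by (rule psd_nonneg[OF Hsc(1) Hsc(2) _ gc(1)]) (simp add: Hspos less_imp_le)
    have "\<epsilon>\<^sup>2/2 * (g k \<bullet> (MT nx nt Hx *\<^sub>v g k)) \<le> \<epsilon>\<^sup>2/2 * (g0 k \<bullet> (MB nx nt Hx *\<^sub>v g0 k)) + \<epsilon> * Y k + v k * X k"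
      by (rule alg_step[OF eps _ I h sig_s sig_a]) (use E in simp)
    then show "\<epsilon>\<^sup>2/2 * (g k \<bullet> (MT nx nt Hx *\<^sub>v g k)) \<le> \<epsilon>\<^sup>2/2 * (g0 k \<bullet> (MB nx nt Hx *\<^sub>v g0 k)) + \<epsilon> * Y k + v k * X k"
      by simp
  qed
  have sumineq: "(\<Sum>k<nv. w k * (\<epsilon>\<^sup>2/2 * (g k \<bullet> (MT nx nt Hx *\<^sub>v g k))))
      \<le> (\<Sum>k<nv. w k * (\<epsilon>\<^sup>2/2 * (g0 k \<bullet> (MB nx nt Hx *\<^sub>v g0 k)) + \<epsilon> * Y k + v k * X k))"
    by (rule sum_mono, rule mult_left_mono) (use ineq w_pos in \<open>auto simp: less_imp_le\<close>)
  have sY: "(\<Sum>k<nv. w k * Y k) = 0"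
  proof -
    have "(\<Sum>k<nv. w k * Y k) = (\<Sum>k<nv. \<Sum>j<nv. w j * v j * (w k * (g k \<bullet> (A *\<^sub>v g j))))"
      unfolding Y_def by (simp add: sum_distrib_left mult_ac)
    also have "\<dots> = (\<Sum>j<nv. \<Sum>k<nv. w j * v j * (w k * (g k \<bullet> (A *\<^sub>v g j))))" by (rule sum.swap)
    also have "\<dots> = (\<Sum>j<nv. w j * v j * (G \<bullet> (A *\<^sub>v g j)))"
    proof (rule sum.cong[OF refl])
      fix j assume j: "j \<in> {..<nv}"
      have "G \<bullet> (A *\<^sub>v g j) = (\<Sum>k<nv. w k * (g k \<bullet> (A *\<^sub>v g j)))"
        unfolding G_def by (rule vavg_left) (use Ac gk j in auto)
      then show "(\<Sum>k<nv. w j * v j * (w k * (g k \<bullet> (A *\<^sub>v g j)))) = w j * v j * (G \<bullet> (A *\<^sub>v g j))"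
        by (simp add: sum_distrib_left)
    qed
    also have "\<dots> = 0" using G0 Ac gk by simp
    finally show ?thesis .
  qed
  have rhs: "(\<Sum>k<nv. w k * (\<epsilon>\<^sup>2/2 * (g0 k \<bullet> (MB nx nt Hx *\<^sub>v g0 k)) + \<epsilon> * Y k + v k * X k))
      = \<epsilon>\<^sup>2/2 * (\<Sum>k<nv. w k * (g0 k \<bullet> (MB nx nt Hx *\<^sub>v g0 k))) + \<epsilon> * (\<Sum>k<nv. w k * Y k) + (\<Sum>k<nv. w k * (v k * X k))"
    by (simp add: sum.distrib sum_distrib_left algebra_simps)
  have lhs: "(\<Sum>k<nv. w k * (\<epsilon>\<^sup>2/2 * (g k \<bullet> (MT nx nt Hx *\<^sub>v g k)))) = \<epsilon>\<^sup>2/2 * (\<Sum>k<nv. w k * (g k \<bullet> (MT nx nt Hx *\<^sub>v g k)))"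
    by (simp add: sum_distrib_left algebra_simps)
  have ERr: "(1/2) * (\<rho> \<bullet> (MT nx nt Hx *\<^sub>v \<rho>)) \<le> (1/2) * (\<rho>0 \<bullet> (MB nx nt Hx *\<^sub>v \<rho>0)) - (\<Sum>k<nv. w k * (v k * X k))"
  proof -
    have e: "(1/2) * (\<rho> \<bullet> (MT nx nt Hx *\<^sub>v \<rho>)) - (1/2) * (\<rho> \<bullet> (MB nx nt Hx *\<^sub>v \<rho>)) + (\<Sum>k<nv. w k * (v k * X k))
      = - \<sigma>a * (\<rho> \<bullet> (Hs *\<^sub>v \<rho>)) - (\<rho> \<bullet> (MB nx nt Hx *\<^sub>v \<rho>) - \<rho> \<bullet> (MB nx nt Hx *\<^sub>v \<rho>0))"
      using ER[OF dim_rho] Tf[OF dim_rho] unfolding X_def by simp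
    have I: "-(1/2) * (\<rho> \<bullet> (MB nx nt Hx *\<^sub>v \<rho>)) + \<rho> \<bullet> (MB nx nt Hx *\<^sub>v \<rho>0) \<le> (1/2) * (\<rho>0 \<bullet> (MB nx nt Hx *\<^sub>v \<rho>0))"
      by (rule psd_ineq[OF MBc(1) MBc(2) MBnn dim_rho dim_rho0])
    have h: "0 \<le> \<rho> \<bullet> (Hs *\<^sub>v \<rho>)" by (rule psd_nonneg[OF Hsc(1) Hsc(2) _ dim_rho]) (simp add: Hspos less_imp_le)
    have "0 \<le> \<sigma>a * (\<rho> \<bullet> (Hs *\<^sub>v \<rho>))" using sig_a h by simp
    then show ?thesis using e I by linarith
  qed
  show ?thesis using sumineq ERr sY unfolding rhs lhs by simp
qed

end
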